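(* Let $\zeta: \mathrm{TVB}_2 \to \mathrm{GL}_3(\mathbb{C})$ be a complex homogeneous local representation of $\mathrm{TVB}_2$. Then $\zeta$ is equivalent to one of the following eight representations (for a $2\times 2$ matrix $M$ write $M\oplus 1=\begin{pmatrix} M & 0\\ 0 & 1\end{pmatrix}$ and $1\oplus M=\begin{pmatrix} 1 & 0\\ 0 & M\end{pmatrix}$): \begin{itemize} \item[(1)] $\zeta_1(\sigma_1)=\begin{pmatrix} d & b\\ b/x^2 & d\end{pmatrix}\oplus 1$, $\zeta_1(\rho_1)=\begin{pmatrix} 0 & x\\ 1/x & 0\end{pmatrix}\oplus 1$, $\zeta_1(\gamma_1)=\mathrm{diag}(-1,1,1)$, $\zeta_1(\gamma_2)=\mathrm{diag}(1,-1,1)$, where $b,d,x\in\mathbb{C}$, $b^2-d^2x^2\neq 0$, $x\neq 0$. \item[(2)] $\zeta_2(\sigma_1)=\begin{pmatrix} \frac{2bw+dx}{x} & b\\ \frac{b-bw^2}{x^2} & d\end{pmatrix}\oplus 1$, $\zeta_2(\rho_1)=\begin{pmatrix} w & x\\ \frac{1-w^2}{x} & -w\end{pmatrix}\oplus 1$, $\zeta_2(\gamma_1)=\zeta_2(\gamma_2)=I_3$, where $b,d,w,x\in\mathbb{C}$, $x\neq 0$, $dx+bw\neq b$ and $dx+bw\neq -b$. \item[(3)] $\zeta_3(\sigma_1)=\begin{pmatrix} a & b\\ c & d\end{pmatrix}\oplus 1$, $\zeta_3(\rho_1)=\mathrm{diag}(-1,-1,1)$, $\zeta_3(\gamma_1)=\zeta_3(\gamma_2)=I_3$,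 where $a,b,c,d\in\mathbb{C}$, $ad-bc\neq 0$. \item[(4)] $\zeta_4(\sigma_1)=\begin{pmatrix} a & b\\ c & d\end{pmatrix}\oplus 1$, $\zeta_4(\rho_1)=I_3$, $\zeta_4(\gamma_1)=\zeta_4(\gamma_2)=I_3$, where $a,b,c,d\in\mathbb{C}$, $ad-bc\neq 0$. \item[(5)] $\zeta_5(\sigma_1)=\begin{pmatrix} a & 0\\ c & d\end{pmatrix}\oplus 1$, $\zeta_5(\rho_1)=\begin{pmatrix} -1 & 0\\ \frac{2c}{d-a} & 1\end{pmatrix}\oplus 1$, $\zeta_5(\gamma_1)=\zeta_5(\gamma_2)=I_3$, where $a,c,d\in\mathbb{C}$, $ad\neq 0$, $a\neq d$. \item[(6)] $\zeta_6(\sigma_1)=\begin{pmatrix} a & 0\\ c & d\end{pmatrix}\oplus 1$, $\zeta_6(\rho_1)=\begin{pmatrix} 1 & 0\\ \frac{2c}{a-d} & -1\end{pmatrix}\oplus 1$, $\zeta_6(\gamma_1)=\zeta_6(\gamma_2)=I_3$, where $a,c,d\in\mathbb{C}$, $ad\neq 0$, $a\neq d$. \item[(7)] $\zeta_7(\sigma_1)=\mathrm{diag}(d,d,1)$, $\zeta_7(\rho_1)=\begin{pmatrix} 1 & 0\\ y & -1\end{pmatrix}\oplus 1$, $\zeta_7(\gamma_1)=\zeta_7(\gamma_2)=I_3$, where $d,y\in\mathbb{C}$, $d\neq 0$. \item[(8)] $\zeta_8(\sigma_1)=\mathrm{diag}(d,d,1)$, $\zeta_8(\rho_1)=\begin{pmatrix}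 -1 & 0\\ y & 1\end{pmatrix}\oplus 1$, $\zeta_8(\gamma_1)=\zeta_8(\gamma_2)=I_3$, where $d,y\in\mathbb{C}$, $d\neq 0$. \end{itemize}
   Context: The twisted virtual braid group $\mathrm{TVB}_2$ is the group with generators $\sigma_1,\rho_1,\gamma_1,\gamma_2$ and defining relations $\rho_1^2=1$, $\gamma_1^2=\gamma_2^2=1$, $\gamma_1\gamma_2=\gamma_2\gamma_1$, $\rho_1\gamma_1=\gamma_2\rho_1$, $\rho_1\sigma_1\rho_1=\gamma_2\gamma_1\sigma_1\gamma_1\gamma_2$. A complex local representation $\zeta:\mathrm{TVB}_2\to \mathrm{GL}_3(\mathbb{C})$ is a group homomorphism of the form $\zeta(\sigma_1)=S\oplus 1$, $\zeta(\rho_1)=R\oplus 1$, $\zeta(\gamma_1)=G_1\oplus 1$, $\zeta(\gamma_2)=1\oplus G_2$ with $S,R,G_1,G_2\in \mathrm{GL}_2(\mathbb{C})$, where $M\oplus 1$ is the block-diagonal matrix with blocks $M$ and $1$ and $1\oplus M$ the block-diagonal matrix with blocks $1$ and $M$. It is homogeneous if $G_1=G_2$. Two representations are equivalent if they are conjugate by a fixed invertible matrix. *)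

theory Defs
  imports "HOL-Analysis.Analysis"
begin

definition mat2 :: "complex \<Rightarrow> complex \<Rightarrow> complex \<Rightarrow> complex \<Rightarrow> complex^2^2" where
  "mat2 a b c d = vector [vector [a, b], vector [c, d]]"

definition mat3 :: "complex \<Rightarrow> complex \<Rightarrow> complex \<Rightarrow> complex \<Rightarrow> complex \<Rightarrow> complex
    \<Rightarrow> complex \<Rightarrow> complex \<Rightarrow> complex \<Rightarrow> complex^3^3" where
  "mat3 a11 a12 a13 a21 a22 a23 a31 a32 a33 =
     vector [vector [a11, a12, a13], vector [a21, a22, a23], vector [a31, a32, a33]]"

definition dsum_l :: "complex^2^2 \<Rightarrow> complex^3^3" where
  "dsum_l M = mat3 (M$1$1) (M$1$2) 0  (M$2$1) (M$2$2) 0  0 0 1"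

definition dsum_r :: "complex^2^2 \<Rightarrow> complex^3^3" where
  "dsum_r M = mat3 1 0 0  0 (M$1$1) (M$1$2)  0 (M$2$1) (M$2$2)"

definition diag3 :: "complex \<Rightarrow> complex \<Rightarrow> complex \<Rightarrow> complex^3^3" where
  "diag3 a b c = mat3 a 0 0  0 b 0  0 0 c"

text \<open>A representation of TVB_2 into GL_3(C) is given by the images of the generators
  (sigma_1, rho_1, gamma_1, gamma_2); a homomorphism out of the presented group TVB_2
  is exactly a choice of invertible images satisfying the defining relations.\<close>
type_synonym rep3 = "(complex^3^3) \<times> (complex^3^3) \<times> (complex^3^3) \<times> (complex^3^3)"

fun TVB2_relations :: "rep3 \<Rightarrow> bool" where
  "TVB2_relations (Zs, Zr, Zg1, Zg2) = (
      invertible Zs \<and> invertible Zr \<and> invertible Zg1 \<and> invertible Zg2 \<and>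
      Zr ** Zr = mat 1 \<and>
      Zg1 ** Zg1 = mat 1 \<and> Zg2 ** Zg2 = mat 1 \<and>
      Zg1 ** Zg2 = Zg2 ** Zg1 \<and>
      Zr ** Zg1 = Zg2 ** Zr \<and>
      Zr ** Zs ** Zr = Zg2 ** Zg1 ** Zs ** Zg1 ** Zg2)"

definition local_rep :: "complex^2^2 \<Rightarrow> complex^2^2 \<Rightarrow> complex^2^2 \<Rightarrow> complex^2^2 \<Rightarrow> rep3" where
  "local_rep S R G1 G2 = (dsum_l S, dsum_l R, dsum_l G1, dsum_r G2)"

definition is_local_rep :: "complex^2^2 \<Rightarrow> complex^2^2 \<Rightarrow> complex^2^2 \<Rightarrow> complex^2^2 \<Rightarrow> bool" where
  "is_local_rep S R G1 G2 = (invertible S \<and> invertible R \<and> invertible G1 \<and> invertible G2 \<and>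
      TVB2_relations (local_rep S R G1 G2))"

fun rep_equiv :: "rep3 \<Rightarrow> rep3 \<Rightarrow> bool" where
  "rep_equiv (Zs, Zr, Zg1, Zg2) (Ws, Wr, Wg1, Wg2) = (\<exists>P :: complex^3^3. invertible P \<and>
     (
        P ** Zs ** matrix_inv P = Ws \<and> P ** Zr ** matrix_inv P = Wr \<and>
        P ** Zg1 ** matrix_inv P = Wg1 \<and> P ** Zg2 ** matrix_inv P = Wg2))"

definition I3 :: "complex^3^3" where "I3 = mat 1"

definition zeta1 :: "complex \<Rightarrow> complex \<Rightarrow> complex \<Rightarrow> rep3" where
  "zeta1 b d x = (dsum_l (mat2 d b (b / x^2) d), dsum_l (mat2 0 x (1 / x) 0),
                  diag3 (-1) 1 1, diag3 1 (-1) 1)"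

definition zeta2 :: "complex \<Rightarrow> complex \<Rightarrow> complex \<Rightarrow> complex \<Rightarrow> rep3" where
  "zeta2 b d w x = (dsum_l (mat2 ((2*b*w + d*x) / x) b ((b - b*w^2) / x^2) d),
                    dsum_l (mat2 w x ((1 - w^2) / x) (-w)), I3, I3)"

definition zeta3 :: "complex \<Rightarrow> complex \<Rightarrow> complex \<Rightarrow> complex \<Rightarrow> rep3" where
  "zeta3 a b c d = (dsum_l (mat2 a b c d), diag3 (-1) (-1) 1, I3, I3)"

definition zeta4 :: "complex \<Rightarrow> complex \<Rightarrow> complex \<Rightarrow> complex \<Rightarrow> rep3" where
  "zeta4 a b c d = (dsum_l (mat2 a b c d), I3, I3, I3)"

definition zeta5 :: "complex \<Rightarrow> complex \<Rightarrow> complex \<Rightarrow> rep3" where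
  "zeta5 a c d = (dsum_l (mat2 a 0 c d), dsum_l (mat2 (-1) 0 (2*c / (d - a)) 1), I3, I3)"

definition zeta6 :: "complex \<Rightarrow> complex \<Rightarrow> complex \<Rightarrow> rep3" where
  "zeta6 a c d = (dsum_l (mat2 a 0 c d), dsum_l (mat2 1 0 (2*c / (a - d)) (-1)), I3, I3)"

definition zeta7 :: "complex \<Rightarrow> complex \<Rightarrow> rep3" where
  "zeta7 d y = (diag3 d d 1, dsum_l (mat2 1 0 y (-1)), I3, I3)"

definition zeta8 :: "complex \<Rightarrow> complex \<Rightarrow> rep3" where
  "zeta8 d y = (diag3 d d 1, dsum_l (mat2 (-1) 0 y 1), I3, I3)"

end

theory Submission
  imports Defs
begin

lemma mat3_nth: "mat3 a11 a12 a13 a21 a22 a23 a31 a32 a33 $ 1 $ 1 = a11"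
  "mat3 a11 a12 a13 a21 a22 a23 a31 a32 a33 $ 1 $ 2 = a12"
  "mat3 a11 a12 a13 a21 a22 a23 a31 a32 a33 $ 1 $ 3 = a13"
  "mat3 a11 a12 a13 a21 a22 a23 a31 a32 a33 $ 2 $ 1 = a21"
  "mat3 a11 a12 a13 a21 a22 a23 a31 a32 a33 $ 2 $ 2 = a22"
  "mat3 a11 a12 a13 a21 a22 a23 a31 a32 a33 $ 2 $ 3 = a23"
  "mat3 a11 a12 a13 a21 a22 a23 a31 a32 a33 $ 3 $ 1 = a31"
  "mat3 a11 a12 a13 a21 a22 a23 a31 a32 a33 $ 3 $ 2 = a32"
  "mat3 a11 a12 a13 a21 a22 a23 a31 a32 a33 $ 3 $ 3 = a33"
  by (simp_all add: mat3_def)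

lemma mat2_nth: "mat2 a b c d $ 1 $ 1 = a" "mat2 a b c d $ 1 $ 2 = b"
  "mat2 a b c d $ 2 $ 1 = c" "mat2 a b c d $ 2 $ 2 = d"
  by (simp_all add: mat2_def)

lemma mat3_eq: "(mat3 a11 a12 a13 a21 a22 a23 a31 a32 a33 = mat3 b11 b12 b13 b21 b22 b23 b31 b32 b33)
  \<longleftrightarrow> a11 = b11 \<and> a12 = b12 \<and> a13 = b13 \<and> a21 = b21 \<and> a22 = b22 \<and> a23 = b23 \<and> a31 = b31 \<and> a32 = b32 \<and> a33 = b33"
  (is "?l \<longleftrightarrow> ?r")
proof
  assume ?l then show ?r by (metis mat3_nth)
next
  assume ?r then show ?l by simp
qed

lemma mat3_mult: "mat3 a11 a12 a13 a21 a22 a23 a31 a32 a33 ** mat3 b11 b12 b13 b21 b22 b23 b31 b32 b33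
  = mat3 (a11*b11+a12*b21+a13*b31) (a11*b12+a12*b22+a13*b32) (a11*b13+a12*b23+a13*b33)
         (a21*b11+a22*b21+a23*b31) (a21*b12+a22*b22+a23*b32) (a21*b13+a22*b23+a23*b33)
         (a31*b11+a32*b21+a33*b31) (a31*b12+a32*b22+a33*b32) (a31*b13+a32*b23+a33*b33)"
  by (simp add: vec_eq_iff forall_3 matrix_matrix_mult_def sum_3 mat3_nth)

lemma mat1_3: "(mat 1 :: complex^3^3) = mat3 1 0 0 0 1 0 0 0 1"
  by (simp add: vec_eq_iff forall_3 mat3_nth mat_def)

lemma mat2_eta: "(M::complex^2^2) = mat2 (M$1$1) (M$1$2) (M$2$1) (M$2$2)"
  by (simp add: vec_eq_iff forall_2 mat2_nth)

lemma inv_mat1: "matrix_inv (mat 1 :: complex^3^3) = mat 1"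
proof -
  have "mat 1 ** matrix_inv (mat 1 :: complex^3^3) = mat 1 \<and> matrix_inv (mat 1 :: complex^3^3) ** mat 1 = mat 1"
    unfolding matrix_inv_def by (rule someI[of _ "mat 1"]) simp
  then show ?thesis by (simp add: matrix_mul_lid)
qed

lemma equiv_refl: "rep_equiv X X"
proof -
  obtain a b c d where "X = (a,b,c,d)" by (cases X) auto
  then show ?thesis
    by (auto intro!: exI[of _ "mat 1"] simp: inv_mat1 matrix_mul_lid matrix_mul_rid invertible_def)
qed
lemma facts:
  fixes s11 s12 s21 s22 r11 r12 r21 r22 g11 g12 g21 g22 :: complex
  assumes "is_local_rep (mat2 s11 s12 s21 s22) (mat2 r11 r12 r21 r22) (mat2 g11 g12 g21 g22) (mat2 g11 g12 g21 g22)"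
  shows "g12 = 0 \<and> g21 = 0 \<and> g22 = 1 \<and> g11*g11 = 1 \<and> s11 * s22 \<noteq> s12 * s21 \<and>
    r11 * r22 \<noteq> r12 * r21 \<and>
    r11 * r11 + r12 * r21 = 1 \<and>
    r11 * r12 + r12 * r22 = 0 \<and>
    r21 * r11 + r22 * r21 = 0 \<and>
    r21 * r12 + r22 * r22 = 1 \<and> r11 * g11 = r11 \<and> g11 * r22 = r22 \<and>
    (r11 * s11 + r12 * s21) * r11 + (r11 * s12 + r12 * s22) * r21 = s11 \<and>
    (r11 * s11 + r12 * s21) * r12 + (r11 * s12 + r12 * s22) * r22 = s12 \<and>
    (r21 * s11 + r22 * s21) * r11 + (r21 * s12 + r22 * s22) * r21 = s21 \<and>
    (r21 * s11 + r22 * s21) * r12 + (r21 * s12 + r22 * s22) * r22 = s22"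
proof -
  have A: "g12 = 0" "g21 = 0" "g22 = 1" using assms
    by (simp_all add: is_local_rep_def local_rep_def dsum_l_def dsum_r_def mat2_nth mat3_mult mat1_3 mat3_eq invertible_det_nz det_2 del: vector_2 vector_3)
  have g: "g11 * g11 = 1" using assms A
    by (simp add: is_local_rep_def local_rep_def dsum_l_def dsum_r_def mat2_nth mat3_mult mat1_3 mat3_eq invertible_det_nz det_2 del: vector_2 vector_3)
  have B: "g11 * (g11 * x) = x" for x using g by (metis mult.assoc mult_1)
  show ?thesis using assms A g
    by (simp add: is_local_rep_def local_rep_def dsum_l_def dsum_r_def mat2_nth mat3_mult mat1_3 mat3_eq invertible_det_nz det_2 algebra_simps B del: vector_2 vector_3)
qed

lemma main:
  fixes S R G :: "complex^2^2" and s11 s12 s21 s22 r11 r12 r21 r22 g11 g12 g21 g22 :: complex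
  assumes H: "is_local_rep S R G G"
    and eS: "S = mat2 s11 s12 s21 s22" and eR: "R = mat2 r11 r12 r21 r22" and eG: "G = mat2 g11 g12 g21 g22"
  shows "(\<exists>b d x. b^2 - d^2 * x^2 \<noteq> 0 \<and> x \<noteq> 0 \<and>
            rep_equiv (local_rep S R G G) (zeta1 b d x))
       \<or> (\<exists>b d w x. x \<noteq> 0 \<and> d*x + b*w \<noteq> b \<and> d*x + b*w \<noteq> -b \<and>
            rep_equiv (local_rep S R G G) (zeta2 b d w x))
       \<or> (\<exists>a b c d. a*d - b*c \<noteq> 0 \<and> rep_equiv (local_rep S R G G) (zeta3 a b c d))
       \<or> (\<exists>a b c d. a*d - b*c \<noteq> 0 \<and> rep_equiv (local_rep S R G G) (zeta4 a b c d))
       \<or> (\<exists>a c d. a*d \<noteq> 0 \<and> a \<noteq> d \<and> rep_equiv (local_rep S R G G) (zeta5 a c d))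
       \<or> (\<exists>a c d. a*d \<noteq> 0 \<and> a \<noteq> d \<and> rep_equiv (local_rep S R G G) (zeta6 a c d))
       \<or> (\<exists>d y. d \<noteq> 0 \<and> rep_equiv (local_rep S R G G) (zeta7 d y))
       \<or> (\<exists>d y. d \<noteq> 0 \<and> rep_equiv (local_rep S R G G) (zeta8 d y))"
proof -
  have F: "g12 = 0 \<and> g21 = 0 \<and> g22 = 1 \<and> g11*g11 = 1 \<and> s11 * s22 \<noteq> s12 * s21 \<and>
    r11 * r22 \<noteq> r12 * r21 \<and>
    r11 * r11 + r12 * r21 = 1 \<and>
    r11 * r12 + r12 * r22 = 0 \<and>
    r21 * r11 + r22 * r21 = 0 \<and>
    r21 * r12 + r22 * r22 = 1 \<and> r11 * g11 = r11 \<and> g11 * r22 = r22 \<and>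
    (r11 * s11 + r12 * s21) * r11 + (r11 * s12 + r12 * s22) * r21 = s11 \<and>
    (r11 * s11 + r12 * s21) * r12 + (r11 * s12 + r12 * s22) * r22 = s12 \<and>
    (r21 * s11 + r22 * s21) * r11 + (r21 * s12 + r22 * s22) * r21 = s21 \<and>
    (r21 * s11 + r22 * s21) * r12 + (r21 * s12 + r22 * s22) * r22 = s22"
    using facts H eS eR eG by blast
  then have g0: "g12 = 0" "g21 = 0" "g22 = 1" and gg: "g11*g11 = 1" and dS: "s11 * s22 \<noteq> s12 * s21"
    and dR: "r11 * r22 \<noteq> r12 * r21"
    and R1: "r11 * r11 + r12 * r21 = 1" and R2: "r11 * r12 + r12 * r22 = 0"
    and R3: "r21 * r11 + r22 * r21 = 0" and R4: "r21 * r12 + r22 * r22 = 1"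
    and rg1: "r11 * g11 = r11" and rg2: "g11 * r22 = r22"
    and E1: "(r11 * s11 + r12 * s21) * r11 + (r11 * s12 + r12 * s22) * r21 = s11"
    and E2: "(r11 * s11 + r12 * s21) * r12 + (r11 * s12 + r12 * s22) * r22 = s12"
    and E3: "(r21 * s11 + r22 * s21) * r11 + (r21 * s12 + r22 * s22) * r21 = s21"
    and E4: "(r21 * s11 + r22 * s21) * r12 + (r21 * s12 + r22 * s22) * r22 = s22"
    by auto
  have C11: "r12 * s21 = s12 * r21" using R1 R2 R3 R4 E1 E2 E3 E4 by algebra
  have C12: "r11 * s12 + r12 * s22 = s11 * r12 + s12 * r22" using R1 R2 R3 R4 E1 E2 E3 E4 by algebra
  have C21: "r21 * s11 + r22 * s21 = s21 * r11 + s22 * r21" using R1 R2 R3 R4 E1 E2 E3 E4 by algebra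

  have rep: "local_rep S R G G = (dsum_l (mat2 s11 s12 s21 s22), dsum_l (mat2 r11 r12 r21 r22),
      dsum_l (mat2 g11 0 0 1), dsum_r (mat2 g11 0 0 1))"
    using g0 by (simp add: local_rep_def eS eR eG)
  note U = rep dsum_l_def dsum_r_def diag3_def I3_def mat1_3 mat2_nth mat3_eq
  have "g11 = 1 \<or> g11 = -1" using gg
    by (metis add.inverse_inverse minus_mult_minus mult_1 power2_eq_1_iff power2_eq_square)
  then show ?thesis
  proof
    assume g: "g11 = -1"
    have r11: "r11 = 0" using rg1 g by simp
    have r22: "r22 = 0" using rg2 g by simp
    have x: "r12 \<noteq> 0" using dR r22 by auto
    have r21: "r21 = 1 / r12" using R1 r11 x by (simp add: field_simps)
    have "s11 = (r12*r21) * s22" using E1 r11 by (simp add: algebra_simps)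
    then have s22: "s22 = s11" using R1 r11 by simp
    have s21m: "s21 * r12^2 = s12" using E2 r11 r22 by (simp add: power2_eq_square algebra_simps)
    then have s21: "s21 = s12 / r12^2" using x by (simp add: field_simps)
    have "local_rep S R G G = zeta1 s12 s11 r12"
      by (simp add: U zeta1_def g r11 r22 r21 s22 s21)
    moreover have "s12^2 - s11^2 * r12^2 \<noteq> 0"
    proof
      assume h: "s12^2 - s11^2 * r12^2 = 0"
      have "r12*r12*(s11 * s11 - s12 * s21) = 0" using h s21m by algebra
      then have "s11 * s11 = s12 * s21" using x by simp
      then show False using dS s22 by simp
    qed
    ultimately show ?thesis using x equiv_refl by metis
  next
    assume g: "g11 = 1"
    show ?thesis
    proof (cases "r12 = 0")
      case False
      have r22: "r22 = - r11" using R2 False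
        by (metis add_eq_0_iff distrib_left mult.commute mult_eq_0_iff)
      have r21m: "r12 * r21 = 1 - r11^2" using R1 by (simp add: power2_eq_square eq_diff_eq add.commute)
      then have r21: "r21 = (1 - r11^2) / r12" using False by (simp add: field_simps)
      have s11m: "s11 * r12 = 2 * s12*r11 + s22*r12" using C12 r22 by (simp add: algebra_simps)
      then have s11: "s11 = (2 * s12*r11 + s22*r12) / r12" using False by (simp add: field_simps)
      have "s21 * r12^2 = r12 * (r12 * s21)" by (simp add: power2_eq_square mult_ac)
      also have "\<dots> = r12 * (s12 * r21)" using C11 by simp
      also have "\<dots> = s12 * (r12 * r21)" by (simp add: mult_ac)
      also have "\<dots> = s12 - s12*r11^2" using r21m by (simp add: right_diff_distrib)
      finally have s21m: "s21 * r12^2 = s12 - s12*r11^2" .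
      then have s21: "s21 = (s12 - s12*r11^2) / r12^2" using False by (simp add: field_simps)
      have "local_rep S R G G = zeta2 s12 s22 r11 r12"
        unfolding rep zeta2_def I3_def dsum_l_def dsum_r_def diag3_def mat1_3 mat2_nth g
        by (simp only: r22 r21 s11 s21)
      moreover have key: "r12^2 * (s11 * s22 - s12 * s21) = (s22*r12 + s12*r11)^2 - s12^2"
      proof -
        have "r12^2 * (s11 * s22 - s12 * s21) = r12 * s22 * (s11 * r12) - s12 * (s21 * r12^2)"
          by (simp add: algebra_simps power2_eq_square)
        also have "\<dots> = r12 * s22 * (2 * s12*r11 + s22*r12) - s12 * (s12 - s12*r11^2)"
          by (simp only: s11m s21m)
        also have "\<dots> = (s22*r12 + s12*r11)^2 - s12^2" by (simp add: algebra_simps power2_eq_square)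
        finally show ?thesis .
      qed
      have "s22*r12 + s12*r11 \<noteq> s12"
      proof
        assume "s22*r12 + s12*r11 = s12"
        then have "r12^2 * (s11 * s22 - s12 * s21) = 0" using key by simp
        then show False using False dS by simp
      qed
      moreover have "s22*r12 + s12*r11 \<noteq> - s12"
      proof
        assume "s22*r12 + s12*r11 = - s12"
        then have "r12^2 * (s11 * s22 - s12 * s21) = 0" using key by simp
        then show False using False dS by simp
      qed
      ultimately show ?thesis using False equiv_refl by metis
    next
      case True
      have "r11 * r11 = 1" using R1 True by simp
      then have r11: "r11 = 1 \<or> r11 = -1"
        by (metis add.inverse_inverse minus_mult_minus mult_1 power2_eq_1_iff power2_eq_square)
      have "r22 * r22 = 1" using R4 True by simp
      then have r22: "r22 = 1 \<or> r22 = -1"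
        by (metis add.inverse_inverse minus_mult_minus mult_1 power2_eq_1_iff power2_eq_square)
      have R3': "r21 * (r11 + r22) = 0" using R3 by (simp add: algebra_simps)
      show ?thesis
      proof (cases "r11 = 1")
        case r11p: True
        show ?thesis
        proof (cases "r22 = 1")
          case r22p: True
          have r21: "r21 = 0" using R3' r11p r22p by simp
          have "local_rep S R G G = zeta4 s11 s12 s21 s22"
            by (simp add: U zeta4_def g r11p r22p r21 True)
          then show ?thesis using dS equiv_refl by (metis eq_iff_diff_eq_0)
        next
          case r22m: False
          then have r22m: "r22 = -1" using r22 by simp
          have s12: "s12 = 0" using C12 r11p r22m True by simp
          have s21m: "2 * s21 = r21 * (s11 - s22)" using C21 r11p r22m by (simp add: algebra_simps)
          show ?thesis
          proof (cases "s11 = s22")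
            case True
            have "s21 = 0" using s21m True by simp
            then have "local_rep S R G G = zeta7 s11 r21"
              by (simp add: U zeta7_def g r11p r22m \<open>r12 = 0\<close> s12 True)
            moreover have "s11 \<noteq> 0" using dS s12 by auto
            ultimately show ?thesis using equiv_refl by metis
          next
            case False
            then have r21: "r21 = 2 * s21 / (s11 - s22)" using s21m by (simp add: field_simps)
            have "local_rep S R G G = zeta6 s11 s21 s22"
              by (simp add: U zeta6_def g r11p r22m \<open>r12 = 0\<close> s12 r21)
            moreover have "s11 * s22 \<noteq> 0" using dS s12 by auto
            ultimately show ?thesis using equiv_refl False by metis
          qed
        qed
      next
        case r11m: False
        then have r11m: "r11 = -1" using r11 by simp
        show ?thesis
        proof (cases "r22 = 1")
          case r22p: True
          have s12: "s12 = 0" using C12 r11m r22p True by simp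
          have s21m: "2 * s21 = r21 * (s22 - s11)" using C21 r11m r22p by (simp add: algebra_simps)
          show ?thesis
          proof (cases "s11 = s22")
            case True
            have "s21 = 0" using s21m True by simp
            then have "local_rep S R G G = zeta8 s11 r21"
              by (simp add: U zeta8_def g r11m r22p \<open>r12 = 0\<close> s12 True)
            moreover have "s11 \<noteq> 0" using dS s12 by auto
            ultimately show ?thesis using equiv_refl by metis
          next
            case False
            then have r21: "r21 = 2 * s21 / (s22 - s11)" using s21m by (simp add: field_simps)
            have "local_rep S R G G = zeta5 s11 s21 s22"
              by (simp add: U zeta5_def g r11m r22p \<open>r12 = 0\<close> s12 r21)
            moreover have "s11 * s22 \<noteq> 0" using dS s12 by auto
            ultimately show ?thesis using equiv_refl False by metis
          qed
        next
          case r22m: False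
          then have r22m: "r22 = -1" using r22 by simp
          have r21: "r21 = 0" using R3' r11m r22m by simp
          have "local_rep S R G G = zeta3 s11 s12 s21 s22"
            by (simp add: U zeta3_def g r11m r22m r21 True)
          then show ?thesis using dS equiv_refl by (metis eq_iff_diff_eq_0)
        qed
      qed
    qed
  qed
qed
theorem theorem3p1:
  fixes S R G :: "complex^2^2"
  assumes "is_local_rep S R G G"
  shows "(\<exists>b d x. b^2 - d^2 * x^2 \<noteq> 0 \<and> x \<noteq> 0 \<and>
            rep_equiv (local_rep S R G G) (zeta1 b d x))
       \<or> (\<exists>b d w x. x \<noteq> 0 \<and> d*x + b*w \<noteq> b \<and> d*x + b*w \<noteq> -b \<and>
            rep_equiv (local_rep S R G G) (zeta2 b d w x))
       \<or> (\<exists>a b c d. a*d - b*c \<noteq> 0 \<and> rep_equiv (local_rep S R G G) (zeta3 a b c d))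
       \<or> (\<exists>a b c d. a*d - b*c \<noteq> 0 \<and> rep_equiv (local_rep S R G G) (zeta4 a b c d))
       \<or> (\<exists>a c d. a*d \<noteq> 0 \<and> a \<noteq> d \<and> rep_equiv (local_rep S R G G) (zeta5 a c d))
       \<or> (\<exists>a c d. a*d \<noteq> 0 \<and> a \<noteq> d \<and> rep_equiv (local_rep S R G G) (zeta6 a c d))
       \<or> (\<exists>d y. d \<noteq> 0 \<and> rep_equiv (local_rep S R G G) (zeta7 d y))
       \<or> (\<exists>d y. d \<noteq> 0 \<and> rep_equiv (local_rep S R G G) (zeta8 d y))"
  by (rule main[OF assms mat2_eta mat2_eta mat2_eta])

end
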